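(* There exists $C>1$, depending only on $M$, such that for $l$ sufficiently large the following holds: if $E_j(\omega)$ is an eigenvalue of $H_\omega(\Lambda_l)$ with normalized eigenvector $\phi$, $u\in\mathbb{R}^l$ is defined by $u(i)=\phi(i)^2$, $j_0$ is an index with $u(j_0)=\max_ju(j)$, $\mathcal{J}=\{j_0-1,j_0,j_0+1\}$ and $\mathcal{K}=\{1,\dots,l\}\setminus\mathcal{J}$, then $\|u|_{\mathcal{K}}\|_1\in(1/C,1)$.
   Context: Let $(a_\omega(n))_{n\in\mathbb{Z}}$ be real numbers with $|a_\omega(n)|\in[1/M,M]$ for all $n$, for some $M>1$. $H_\omega(\Lambda_l)$ is the hopping operator $(H u)(n)=a_\omega(n+1)u(n+1)+a_\omega(n)u(n-1)$ restricted to $\ell^2(\{1,\dots,l\})$ with Dirichlet boundary conditions. $u|_{\mathcal{K}}$ is the restriction of $u$ to $\mathcal{K}$. *)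

theory Defs
  imports Complex_Main
begin

text \<open>The hopping operator restricted to ell^2({1,...,l}) with Dirichlet boundary
  conditions: vectors are functions int => real, only their values on {1..l} are used
  (values outside are treated as 0).\<close>
definition hop_dirichlet :: "(int \<Rightarrow> real) \<Rightarrow> nat \<Rightarrow> (int \<Rightarrow> real) \<Rightarrow> int \<Rightarrow> real" where
  "hop_dirichlet a l u n =
     (if n + 1 \<le> int l then a (n + 1) * u (n + 1) else 0) +
     (if 1 \<le> n - 1 then a n * u (n - 1) else 0)"

definition is_normalized_eigvec :: "(int \<Rightarrow> real) \<Rightarrow> nat \<Rightarrow> real \<Rightarrow> (int \<Rightarrow> real) \<Rightarrow> bool" where
  "is_normalized_eigvec a l E \<phi> \<longleftrightarrow>
     (\<Sum>i\<in>{1..int l}. (\<phi> i)\<^sup>2) = 1 \<and>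
     (\<forall>n\<in>{1..int l}. hop_dirichlet a l \<phi> n = E * \<phi> n)"

end

theory Submission
  imports Defs
begin

lemma core:
  fixes M E p q1 q2 q3 r a1 a2 :: real
  assumes M: "M > 1" and E: "\<bar>E\<bar> \<le> 2*M" and a1: "1/M \<le> \<bar>a1\<bar>"
    and a2: "1/M \<le> \<bar>a2\<bar>" "\<bar>a2\<bar> \<le> M"
    and e1: "a1*p = E*q1 - a2*q2" and e2: "a2*q1 = E*q2 - r" and r: "\<bar>r\<bar> \<le> M*\<bar>q3\<bar>"
  shows "p\<^sup>2 \<le> 2*(4*M^4+M^2)^2*(q2\<^sup>2+q3\<^sup>2)"
proof -
  have gen: "\<bar>x\<bar> \<le> M*\<bar>b*x\<bar>" if "1/M \<le> \<bar>b\<bar>" for x b :: real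
  proof -
    have "1 \<le> M*\<bar>b\<bar>" using that M by (simp add: field_simps)
    hence "1*\<bar>x\<bar> \<le> (M*\<bar>b\<bar>)*\<bar>x\<bar>" by (rule mult_right_mono) simp
    thus ?thesis by (simp add: abs_mult mult.assoc)
  qed
  have h2: "\<bar>a1*p\<bar> \<le> 2*M*\<bar>q1\<bar> + M*\<bar>q2\<bar>"
  proof -
    have "\<bar>a1*p\<bar> \<le> \<bar>E\<bar>*\<bar>q1\<bar> + \<bar>a2\<bar>*\<bar>q2\<bar>" unfolding e1 abs_mult[symmetric] by (rule abs_triangle_ineq4)
    also have "\<dots> \<le> 2*M*\<bar>q1\<bar> + M*\<bar>q2\<bar>"
      by (intro add_mono mult_right_mono E a2) auto
    finally show ?thesis .
  qed
  have h3: "\<bar>a2*q1\<bar> \<le> 2*M*\<bar>q2\<bar> + M*\<bar>q3\<bar>"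
  proof -
    have "\<bar>a2*q1\<bar> \<le> \<bar>E\<bar>*\<bar>q2\<bar> + \<bar>r\<bar>" unfolding e2 abs_mult[symmetric] by (rule abs_triangle_ineq4)
    also have "\<dots> \<le> 2*M*\<bar>q2\<bar> + M*\<bar>q3\<bar>"
      by (intro add_mono mult_right_mono E r) auto
    finally show ?thesis .
  qed
  have q1: "\<bar>q1\<bar> \<le> M*(2*M*\<bar>q2\<bar> + M*\<bar>q3\<bar>)"
    using gen[OF a2(1), of q1] h3 M by (smt (verit) mult_left_mono)
  have "\<bar>p\<bar> \<le> M*(2*M*\<bar>q1\<bar> + M*\<bar>q2\<bar>)"
    using gen[OF a1, of p] h2 M by (smt (verit) mult_left_mono)
  also have "\<dots> \<le> M*(2*M*(M*(2*M*\<bar>q2\<bar> + M*\<bar>q3\<bar>)) + M*\<bar>q2\<bar>)"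
    using q1 M by (intro mult_left_mono add_mono) auto
  also have "\<dots> = (4*M^4+M^2)*\<bar>q2\<bar> + 2*M^4*\<bar>q3\<bar>" by (simp add: algebra_simps power_def)
  also have "\<dots> \<le> (4*M^4+M^2)*(\<bar>q2\<bar> + \<bar>q3\<bar>)"
    using M by (simp add: algebra_simps)
  finally have hp: "\<bar>p\<bar> \<le> (4*M^4+M^2)*(\<bar>q2\<bar> + \<bar>q3\<bar>)" .
  have "p\<^sup>2 = \<bar>p\<bar>^2" by simp
  also have "\<dots> \<le> ((4*M^4+M^2)*(\<bar>q2\<bar> + \<bar>q3\<bar>))^2"
    by (rule power_mono[OF hp]) simp
  also have "\<dots> = (4*M^4+M^2)^2*(\<bar>q2\<bar> + \<bar>q3\<bar>)^2" by (simp add: power_mult_distrib)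
  also have "\<dots> \<le> (4*M^4+M^2)^2*(2*(q2\<^sup>2+q3\<^sup>2))"
  proof (rule mult_left_mono)
    have a: "(\<bar>q2\<bar>+\<bar>q3\<bar>)^2 = \<bar>q2\<bar>^2+\<bar>q3\<bar>^2 + 2*\<bar>q2\<bar>*\<bar>q3\<bar>" by (simp add: power2_sum)
    have b: "0 \<le> (\<bar>q2\<bar>-\<bar>q3\<bar>)^2" by simp
    hence "2*\<bar>q2\<bar>*\<bar>q3\<bar> \<le> \<bar>q2\<bar>^2+\<bar>q3\<bar>^2" by (simp add: power2_diff)
    thus "(\<bar>q2\<bar> + \<bar>q3\<bar>)^2 \<le> 2*(q2\<^sup>2+q3\<^sup>2)" using a by simp
  qed simp
  finally show ?thesis by (simp add: algebra_simps)
qed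

theorem mainTheorem14:
  fixes M :: real
  assumes "M > 1"
  shows "\<exists>C>1. \<exists>L::nat. \<forall>l\<ge>L. \<forall>(a::int \<Rightarrow> real) E (\<phi>::int \<Rightarrow> real) j0.
           (\<forall>n. 1 / M \<le> \<bar>a n\<bar> \<and> \<bar>a n\<bar> \<le> M) \<longrightarrow>
           is_normalized_eigvec a l E \<phi> \<longrightarrow>
           j0 \<in> {1..int l} \<longrightarrow>
           (\<forall>j\<in>{1..int l}. (\<phi> j)\<^sup>2 \<le> (\<phi> j0)\<^sup>2) \<longrightarrow>
           (let u = (\<lambda>i. (\<phi> i)\<^sup>2);
                K = {1..int l} - {j0 - 1, j0, j0 + 1}
            in 1 / C < (\<Sum>i\<in>K. \<bar>u i\<bar>) \<and> (\<Sum>i\<in>K. \<bar>u i\<bar>) < 1)"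
proof -
  define c where "c = 4*M^4+M^2"
  define C where "C = 6*c^2+2"
  have cpos: "c > 0" unfolding c_def using assms by (intro add_pos_pos zero_less_power mult_pos_pos) auto
  have C1: "C > 1" unfolding C_def using zero_le_power2[of c] by linarith
  have main: "1/C < (\<Sum>i\<in>{1..int l} - {j0 - 1, j0, j0 + 1}. (\<phi> i)\<^sup>2)
      \<and> (\<Sum>i\<in>{1..int l} - {j0 - 1, j0, j0 + 1}. (\<phi> i)\<^sup>2) < 1"
    if l4: "l \<ge> 4" and ab: "\<forall>n. 1 / M \<le> \<bar>a n\<bar> \<and> \<bar>a n\<bar> \<le> M"
      and ev: "is_normalized_eigvec a l E \<phi>" and j0: "j0 \<in> {1..int l}"
      and mx: "\<forall>j\<in>{1..int l}. (\<phi> j)\<^sup>2 \<le> (\<phi> j0)\<^sup>2"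
    for l a E \<phi> j0
  proof -
    define I where "I = {1..int l}"
    define W where "W = {j0 - 1, j0, j0 + 1}"
    define S where "S = (\<Sum>i\<in>I - W. (\<phi> i)\<^sup>2)"
    define p where "p = \<phi> j0"
    have sum1: "(\<Sum>i\<in>I. (\<phi> i)\<^sup>2) = 1" and eig: "\<And>n. n \<in> I \<Longrightarrow> hop_dirichlet a l \<phi> n = E * \<phi> n"
      using ev unfolding is_normalized_eigvec_def I_def by auto
    have mx': "\<And>j. j \<in> I \<Longrightarrow> \<bar>\<phi> j\<bar> \<le> \<bar>p\<bar>" using mx unfolding I_def p_def
      by (simp add: abs_le_square_iff)
    have aM: "\<And>n. \<bar>a n\<bar> \<le> M" and am: "\<And>n. 1/M \<le> \<bar>a n\<bar>" using ab by auto
    have split: "(\<Sum>i\<in>I. (\<phi> i)\<^sup>2) = S + (\<Sum>i\<in>I \<inter> W. (\<phi> i)\<^sup>2)"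
    proof -
      have "(\<Sum>i\<in>I. (\<phi> i)\<^sup>2) = (\<Sum>i\<in>I - I \<inter> W. (\<phi> i)\<^sup>2) + (\<Sum>i\<in>I \<inter> W. (\<phi> i)\<^sup>2)"
        by (rule sum.subset_diff) (auto simp: I_def)
      moreover have "I - I \<inter> W = I - W" by auto
      ultimately show ?thesis unfolding S_def by simp
    qed
    have fin: "finite (I \<inter> W)" unfolding W_def by simp
    have lowW: "p\<^sup>2 \<le> (\<Sum>i\<in>I \<inter> W. (\<phi> i)\<^sup>2)"
    proof -
      have "(\<Sum>i\<in>{j0}. (\<phi> i)\<^sup>2) \<le> (\<Sum>i\<in>I \<inter> W. (\<phi> i)\<^sup>2)"
        by (rule sum_mono2[OF fin]) (use j0 in \<open>auto simp: I_def W_def\<close>)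
      thus ?thesis by (simp add: p_def)
    qed
    have upW: "(\<Sum>i\<in>I \<inter> W. (\<phi> i)\<^sup>2) \<le> 3 * p\<^sup>2"
    proof -
      have "(\<Sum>i\<in>I \<inter> W. (\<phi> i)\<^sup>2) \<le> of_nat (card (I \<inter> W)) * p\<^sup>2"
        by (rule sum_bounded_above) (use mx in \<open>auto simp: I_def p_def\<close>)
      moreover have "card (I \<inter> W) \<le> 3"
      proof -
        have "card (I \<inter> W) \<le> card W" by (rule card_mono) (auto simp: W_def)
        also have "card W \<le> 3" unfolding W_def by (rule order_trans[OF card_insert_le_m1]) (auto simp: card_insert_le_m1)
        finally show ?thesis .
      qed
      ultimately show ?thesis
        using mult_right_mono[of "real (card (I \<inter> W))" 3 "p\<^sup>2"] by simp
    qed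
    have pnz: "p \<noteq> 0"
    proof
      assume "p = 0"
      hence "\<And>j. j \<in> I \<Longrightarrow> \<phi> j = 0" using mx' by fastforce
      hence "(\<Sum>i\<in>I. (\<phi> i)\<^sup>2) = 0" by simp
      thus False using sum1 by simp
    qed
    have Eb: "\<bar>E\<bar> \<le> 2*M"
    proof -
      have bnd: "\<bar>(if P then a m * \<phi> k else 0)\<bar> \<le> M * \<bar>p\<bar>" if "P \<Longrightarrow> k \<in> I" for P m k
      proof (cases P)
        case True
        have "\<bar>a m * \<phi> k\<bar> \<le> M * \<bar>p\<bar>" unfolding abs_mult
          by (rule mult_mono[OF aM mx'[OF that[OF True]]]) (use assms in auto)
        thus ?thesis using True by simp
      qed (use assms in simp)
      have "\<bar>E\<bar> * \<bar>p\<bar> = \<bar>hop_dirichlet a l \<phi> j0\<bar>" using eig[of j0] j0 by (simp add: I_def abs_mult p_def)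
      also have "\<dots> \<le> M*\<bar>p\<bar> + M*\<bar>p\<bar>" unfolding hop_dirichlet_def
        by (rule order_trans[OF abs_triangle_ineq add_mono]; rule bnd) (use j0 in \<open>auto simp: I_def\<close>)
      finally have "\<bar>E\<bar> * \<bar>p\<bar> \<le> (2*M) * \<bar>p\<bar>" by simp
      thus ?thesis using pnz by simp
    qed
    have key: "p\<^sup>2 \<le> 2*c^2*S"
    proof (cases "j0 + 2 \<le> int l")
      case True
      define q3 where "q3 = (if j0 + 3 \<le> int l then \<phi> (j0+3) else 0)"
      define r where "r = (if j0 + 3 \<le> int l then a (j0+3) * \<phi> (j0+3) else 0)"
      have e1: "a (j0+1) * p = E * \<phi> (j0+1) - a (j0+2) * \<phi> (j0+2)"
      proof -
        have "hop_dirichlet a l \<phi> (j0+1) = E * \<phi> (j0+1)" using True j0 by (intro eig) (auto simp: I_def)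
        moreover have "hop_dirichlet a l \<phi> (j0+1) = a (j0+2) * \<phi> (j0+2) + a (j0+1) * p"
          unfolding hop_dirichlet_def p_def using True j0 by (simp add: algebra_simps)
        ultimately show ?thesis by simp
      qed
      have e2: "a (j0+2) * \<phi> (j0+1) = E * \<phi> (j0+2) - r"
      proof -
        have "hop_dirichlet a l \<phi> (j0+2) = E * \<phi> (j0+2)" using True j0 by (intro eig) (auto simp: I_def)
        moreover have "hop_dirichlet a l \<phi> (j0+2) = r + a (j0+2) * \<phi> (j0+1)"
          unfolding hop_dirichlet_def r_def using True j0 by (simp add: algebra_simps)
        ultimately show ?thesis by simp
      qed
      have rb: "\<bar>r\<bar> \<le> M * \<bar>q3\<bar>" unfolding r_def q3_def using aM assms
        by (auto simp: abs_mult intro!: mult_right_mono)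
      have P1: "p\<^sup>2 \<le> 2*c^2*((\<phi> (j0+2))\<^sup>2 + q3\<^sup>2)" unfolding c_def
        by (rule core[OF assms Eb am am aM e1 e2 rb])
      have P2: "(\<phi> (j0+2))\<^sup>2 + q3\<^sup>2 \<le> S"
      proof (cases "j0 + 3 \<le> int l")
        case True3: True
        have "(\<Sum>i\<in>{j0+2, j0+3}. (\<phi> i)\<^sup>2) \<le> S" unfolding S_def
          by (rule sum_mono2) (use True3 j0 in \<open>auto simp: I_def W_def\<close>)
        thus ?thesis using True3 by (simp add: q3_def)
      next
        case False
        have "(\<Sum>i\<in>{j0+2}. (\<phi> i)\<^sup>2) \<le> S" unfolding S_def
          by (rule sum_mono2) (use True j0 in \<open>auto simp: I_def W_def\<close>)
        thus ?thesis using False by (simp add: q3_def)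
      qed
      show ?thesis using P1 mult_left_mono[OF P2, of "2*c^2"] by simp
    next
      case False
      hence L2: "1 \<le> j0 - 2" using j0 l4 by auto
      define q3 where "q3 = (if 1 \<le> j0 - 3 then \<phi> (j0-3) else 0)"
      define r where "r = (if 1 \<le> j0 - 3 then a (j0-2) * \<phi> (j0-3) else 0)"
      have e1: "a j0 * p = E * \<phi> (j0-1) - a (j0-1) * \<phi> (j0-2)"
      proof -
        have "hop_dirichlet a l \<phi> (j0-1) = E * \<phi> (j0-1)" using L2 j0 by (intro eig) (auto simp: I_def)
        moreover have "hop_dirichlet a l \<phi> (j0-1) = a j0 * p + a (j0-1) * \<phi> (j0-2)"
          unfolding hop_dirichlet_def p_def using L2 j0 by (simp add: algebra_simps)
        ultimately show ?thesis by simp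
      qed
      have e2: "a (j0-1) * \<phi> (j0-1) = E * \<phi> (j0-2) - r"
      proof -
        have "hop_dirichlet a l \<phi> (j0-2) = E * \<phi> (j0-2)" using L2 j0 by (intro eig) (auto simp: I_def)
        moreover have "hop_dirichlet a l \<phi> (j0-2) = a (j0-1) * \<phi> (j0-1) + r"
          unfolding hop_dirichlet_def r_def using L2 j0 by (simp add: algebra_simps)
        ultimately show ?thesis by simp
      qed
      have rb: "\<bar>r\<bar> \<le> M * \<bar>q3\<bar>" unfolding r_def q3_def using aM assms
        by (auto simp: abs_mult intro!: mult_right_mono)
      have P1: "p\<^sup>2 \<le> 2*c^2*((\<phi> (j0-2))\<^sup>2 + q3\<^sup>2)" unfolding c_def
        by (rule core[OF assms Eb am am aM e1 e2 rb])
      have P2: "(\<phi> (j0-2))\<^sup>2 + q3\<^sup>2 \<le> S"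
      proof (cases "1 \<le> j0 - 3")
        case True3: True
        have "(\<Sum>i\<in>{j0-2, j0-3}. (\<phi> i)\<^sup>2) \<le> S" unfolding S_def
          by (rule sum_mono2) (use True3 j0 in \<open>auto simp: I_def W_def\<close>)
        thus ?thesis using True3 by (simp add: q3_def)
      next
        case False3: False
        have "(\<Sum>i\<in>{j0-2}. (\<phi> i)\<^sup>2) \<le> S" unfolding S_def
          by (rule sum_mono2) (use L2 j0 in \<open>auto simp: I_def W_def\<close>)
        thus ?thesis using False3 by (simp add: q3_def)
      qed
      show ?thesis using P1 mult_left_mono[OF P2, of "2*c^2"] by simp
    qed
    have "p\<^sup>2 > 0" using pnz by simp
    hence lt1: "S < 1" using split sum1 lowW by linarith
    have "(6*c^2+1)*S = S + 3*(2*c^2*S)" by (simp add: algebra_simps)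
    hence ge: "1 \<le> (6*c^2+1) * S" using split sum1 upW key by linarith
    have Spos: "S > 0"
    proof (rule ccontr)
      assume "\<not> S > 0"
      hence "(6*c^2+1) * S \<le> 0" by (intro mult_nonneg_nonpos) auto
      thus False using ge by simp
    qed
    have "1 < C * S" unfolding C_def using ge Spos by (simp add: algebra_simps)
    hence "1/C < S" using C1 by (simp add: field_simps)
    thus ?thesis using lt1 unfolding S_def I_def W_def by simp
  qed
  show ?thesis
    apply (rule exI[of _ C], rule conjI[OF C1], rule exI[of _ 4])
    using main by (simp add: Let_def)
qed

end
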